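(* For every integer $r\ge 3$ and every $\varepsilon>0$, there exist a positive integer $n$ and an $n$-vertex $K_r$-free graph $G$ such that for every pair of non-adjacent vertices $u,v$, the induced subgraph $G[N(u)\cap N(v)]$ contains at least $\varepsilon n^{r-2}$ copies of $K_{r-2}$, but $G$ has no $K_r$-free homomorphic image of size smaller than $2^{\frac{1}{8r^r\varepsilon}}$ (i.e., there is no $K_r$-free graph $F$ with fewer than $2^{\frac{1}{8r^r\varepsilon}}$ vertices admitting a homomorphism $G\to F$).
   Context: A homomorphism $G\to F$ is a map $\varphi:V(G)\to V(F)$ with $\varphi(u)\varphi(v)\in E(F)$ whenever $uv\in E(G)$. *)

theory Defs
  imports Complex_Main
begin

definition sgraph :: "'a set \<Rightarrow> ('a \<Rightarrow> 'a \<Rightarrow> bool) \<Rightarrow> bool" where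
  "sgraph V E \<longleftrightarrow> finite V \<and> (\<forall>x y. E x y \<longrightarrow> x \<in> V \<and> y \<in> V)
     \<and> (\<forall>x y. E x y \<longrightarrow> E y x) \<and> (\<forall>x. \<not> E x x)"

definition is_clique :: "('a \<Rightarrow> 'a \<Rightarrow> bool) \<Rightarrow> 'a set \<Rightarrow> bool" where
  "is_clique E S \<longleftrightarrow> (\<forall>x\<in>S. \<forall>y\<in>S. x \<noteq> y \<longrightarrow> E x y)"

definition Kr_free :: "'a set \<Rightarrow> ('a \<Rightarrow> 'a \<Rightarrow> bool) \<Rightarrow> nat \<Rightarrow> bool" where
  "Kr_free V E r \<longleftrightarrow> \<not> (\<exists>S. S \<subseteq> V \<and> finite S \<and> card S = r \<and> is_clique E S)"

definition nbhd :: "'a set \<Rightarrow> ('a \<Rightarrow> 'a \<Rightarrow> bool) \<Rightarrow> 'a \<Rightarrow> 'a set" where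
  "nbhd V E u = {w \<in> V. E u w}"

definition num_Kk :: "('a \<Rightarrow> 'a \<Rightarrow> bool) \<Rightarrow> 'a set \<Rightarrow> nat \<Rightarrow> nat" where
  "num_Kk E S k = card {K. K \<subseteq> S \<and> finite K \<and> card K = k \<and> is_clique E K}"

definition graph_hom :: "'a set \<Rightarrow> ('a \<Rightarrow> 'a \<Rightarrow> bool) \<Rightarrow> 'b set \<Rightarrow> ('b \<Rightarrow> 'b \<Rightarrow> bool) \<Rightarrow> ('a \<Rightarrow> 'b) \<Rightarrow> bool" where
  "graph_hom V E W F \<phi> \<longleftrightarrow> (\<forall>x\<in>V. \<phi> x \<in> W) \<and> (\<forall>x y. E x y \<longrightarrow> F (\<phi> x) (\<phi> y))"

end

theory Submission
  imports Defs "HOL-Library.FuncSet"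
begin


lemma transversal:
  assumes fin: "finite T"
  and sub: "\<And>j. j < m \<Longrightarrow> Y j \<subseteq> T"
  and disj: "\<And>i j. i < m \<Longrightarrow> j < m \<Longrightarrow> i \<noteq> j \<Longrightarrow> Y i \<inter> Y j = {}"
  and comp: "\<And>i j y z. i < m \<Longrightarrow> j < m \<Longrightarrow> i \<noteq> j \<Longrightarrow> y \<in> Y i \<Longrightarrow> z \<in> Y j \<Longrightarrow> E y z"
  shows "(\<Prod>j<m. card (Y j)) \<le> num_Kk E T m"
proof -
  let ?P = "PiE {..<m} Y"
  let ?Fam = "{K. K \<subseteq> T \<and> finite K \<and> card K = m \<and> is_clique E K}"
  have fin_fam: "finite ?Fam"
    by (rule finite_subset[of _ "Pow T"]) (use fin in auto)
  have inj: "inj_on (\<lambda>g. g ` {..<m}) ?P"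
  proof (rule inj_onI)
    fix g g' assume g: "g \<in> ?P" and g': "g' \<in> ?P" and eq: "g ` {..<m} = g' ` {..<m}"
    show "g = g'"
    proof (rule PiE_ext[OF g g'])
      fix i assume i: "i \<in> {..<m}"
      then have "g i \<in> g' ` {..<m}" using eq by blast
      then obtain j where j: "j < m" "g i = g' j" by auto
      have "g i \<in> Y i" using g i by (auto simp: PiE_iff)
      moreover have "g' j \<in> Y j" using g' j by (auto simp: PiE_iff)
      ultimately have "i = j" using disj[of i j] i j by auto
      then show "g i = g' i" using j by simp
    qed
  qed
  have img: "(\<lambda>g. g ` {..<m}) ` ?P \<subseteq> ?Fam"
  proof
    fix K assume "K \<in> (\<lambda>g. g ` {..<m}) ` ?P"
    then obtain g where g: "g \<in> ?P" and K: "K = g ` {..<m}" by auto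
    have gi: "\<And>i. i < m \<Longrightarrow> g i \<in> Y i" using g by (auto simp: PiE_iff)
    have injg: "inj_on g {..<m}"
    proof (rule inj_onI)
      fix i j assume i: "i \<in> {..<m}" and j: "j \<in> {..<m}" and e: "g i = g j"
      show "i = j"
      proof (rule ccontr)
        assume "i \<noteq> j"
        then have "Y i \<inter> Y j = {}" using disj i j by auto
        then show False using gi[of i] gi[of j] i j e by auto
      qed
    qed
    have "K \<subseteq> T" using K gi sub by auto
    moreover have "card K = m" using K injg by (simp add: card_image)
    moreover have "is_clique E K"
      unfolding is_clique_def
    proof (intro ballI impI)
      fix x y assume "x \<in> K" "y \<in> K" "x \<noteq> y"
      then obtain i j where "i < m" "j < m" "x = g i" "y = g j" using K by auto
      then show "E x y" using comp[of i j x y] gi \<open>x \<noteq> y\<close> by auto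
    qed
    ultimately show "K \<in> ?Fam" using K by auto
  qed
  have "card ?P \<le> card ?Fam"
    by (rule card_inj_on_le[OF inj img fin_fam])
  then show ?thesis by (simp add: num_Kk_def card_PiE)
qed

lemma transfer:
  fixes V :: "'a set" and E :: "'a \<Rightarrow> 'a \<Rightarrow> bool" and \<beta> \<epsilon> :: real
  assumes sg: "sgraph V E" and kf: "Kr_free V E r" and ne: "V \<noteq> {}"
  and cod: "\<forall>u\<in>V. \<forall>v\<in>V. u \<noteq> v \<and> \<not> E u v \<longrightarrow> real (num_Kk E (nbhd V E u \<inter> nbhd V E v) (r-2)) \<ge> \<epsilon> * real (card V) ^ (r-2)"
  and nh: "\<not> (\<exists>(W::nat set) F (\<phi>::'a \<Rightarrow> nat). sgraph W F \<and> Kr_free W F r \<and> real (card W) < \<beta> \<and> graph_hom V E W F \<phi>)"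
  shows "\<exists>n::nat. n > 0 \<and> (\<exists>E' :: nat \<Rightarrow> nat \<Rightarrow> bool. sgraph {0..<n} E' \<and> Kr_free {0..<n} E' r \<and>
    (\<forall>u\<in>{0..<n}. \<forall>v\<in>{0..<n}. u \<noteq> v \<and> \<not> E' u v \<longrightarrow>
       real (num_Kk E' (nbhd {0..<n} E' u \<inter> nbhd {0..<n} E' v) (r - 2)) \<ge> \<epsilon> * real n ^ (r - 2)) \<and>
    \<not> (\<exists>(W :: nat set) (F :: nat \<Rightarrow> nat \<Rightarrow> bool) (\<phi> :: nat \<Rightarrow> nat).
       sgraph W F \<and> Kr_free W F r \<and> real (card W) < \<beta> \<and> graph_hom {0..<n} E' W F \<phi>))"
proof -
  define n where "n = card V"
  have finV: "finite V" using sg by (simp add: sgraph_def)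
  have npos: "n > 0" using finV ne by (simp add: n_def card_gt_0_iff)
  obtain f where f: "bij_betw f {0..<n} V" using ex_bij_betw_nat_finite[OF finV] n_def by auto
  define g where "g = inv_into {0..<n} f"
  have g: "bij_betw g V {0..<n}" using f g_def by (simp add: bij_betw_inv_into)
  have fg: "\<And>x. x \<in> V \<Longrightarrow> f (g x) = x" using f g_def by (simp add: bij_betw_inv_into_right)
  have fV: "\<And>u. u < n \<Longrightarrow> f u \<in> V" using f by (auto simp: bij_betw_def)
  have gV: "\<And>x. x \<in> V \<Longrightarrow> g x < n" using g by (auto simp: bij_betw_def)
  have finj: "inj_on f {0..<n}" using f by (simp add: bij_betw_def)
  have ginj: "inj_on g V" using g by (simp add: bij_betw_def)
  define E' where "E' = (\<lambda>u v. u < n \<and> v < n \<and> E (f u) (f v))"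
  have sg': "sgraph {0..<n} E'"
    using sg unfolding sgraph_def E'_def by auto
  have kf': "Kr_free {0..<n} E' r"
    unfolding Kr_free_def
  proof
    assume "\<exists>S. S \<subseteq> {0..<n} \<and> finite S \<and> card S = r \<and> is_clique E' S"
    then obtain S where S: "S \<subseteq> {0..<n}" "finite S" "card S = r" "is_clique E' S" by auto
    have "inj_on f S" using finj S(1) inj_on_subset by blast
    then have "card (f ` S) = r" using S by (simp add: card_image)
    moreover have "f ` S \<subseteq> V" using S(1) fV by auto
    moreover have "is_clique E (f ` S)"
      using S(4) unfolding is_clique_def E'_def by auto
    ultimately show False using kf S(2) unfolding Kr_free_def by blast
  qed
  have cod': "\<forall>u\<in>{0..<n}. \<forall>v\<in>{0..<n}. u \<noteq> v \<and> \<not> E' u v \<longrightarrow>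
       real (num_Kk E' (nbhd {0..<n} E' u \<inter> nbhd {0..<n} E' v) (r - 2)) \<ge> \<epsilon> * real n ^ (r - 2)"
  proof (intro ballI impI)
    fix u v assume u: "u \<in> {0..<n}" and v: "v \<in> {0..<n}" and uv: "u \<noteq> v \<and> \<not> E' u v"
    have fu: "f u \<in> V" "f v \<in> V" using u v fV by auto
    have "f u \<noteq> f v" using uv u v finj by (auto dest: inj_onD)
    moreover have "\<not> E (f u) (f v)" using uv u v unfolding E'_def by auto
    ultimately have c: "real (num_Kk E (nbhd V E (f u) \<inter> nbhd V E (f v)) (r-2)) \<ge> \<epsilon> * real n ^ (r-2)"
      using cod fu n_def by auto
    let ?Fam = "{K. K \<subseteq> nbhd V E (f u) \<inter> nbhd V E (f v) \<and> finite K \<and> card K = r-2 \<and> is_clique E K}"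
    let ?Fam' = "{K. K \<subseteq> nbhd {0..<n} E' u \<inter> nbhd {0..<n} E' v \<and> finite K \<and> card K = r-2 \<and> is_clique E' K}"
    have fin': "finite ?Fam'"
      by (rule finite_subset[of _ "Pow {0..<n}"]) (auto simp: nbhd_def)
    have inj: "inj_on ((`) g) ?Fam"
    proof (rule inj_onI)
      fix K L assume K: "K \<in> ?Fam" and L: "L \<in> ?Fam" and e: "g ` K = g ` L"
      have "K \<subseteq> V" "L \<subseteq> V" using K L by (auto simp: nbhd_def)
      then show "K = L" using e ginj by (metis inj_on_image_eq_iff)
    qed
    have img: "(`) g ` ?Fam \<subseteq> ?Fam'"
    proof
      fix K' assume "K' \<in> (`) g ` ?Fam"
      then obtain K where K: "K \<in> ?Fam" and K': "K' = g ` K" by auto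
      have KV: "K \<subseteq> V" using K by (auto simp: nbhd_def)
      have "K' \<subseteq> nbhd {0..<n} E' u \<inter> nbhd {0..<n} E' v"
      proof
        fix w' assume "w' \<in> K'"
        then obtain w where w: "w \<in> K" "w' = g w" using K' by auto
        have wV: "w \<in> V" using w KV by auto
        have "E (f u) w" "E (f v) w" using w K by (auto simp: nbhd_def)
        then show "w' \<in> nbhd {0..<n} E' u \<inter> nbhd {0..<n} E' v"
          using w wV gV fg u v unfolding nbhd_def E'_def by auto
      qed
      moreover have "card K' = r - 2" using K K' KV ginj by (simp add: card_image inj_on_subset)
      moreover have "finite K'" using K K' by auto
      moreover have "is_clique E' K'"
        unfolding is_clique_def
      proof (intro ballI impI)
        fix x' y' assume "x' \<in> K'" "y' \<in> K'" "x' \<noteq> y'"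
        then obtain x y where "x \<in> K" "y \<in> K" "x' = g x" "y' = g y" "x \<noteq> y" using K' by auto
        moreover have "x \<in> V" "y \<in> V" using \<open>x \<in> K\<close> \<open>y \<in> K\<close> KV by auto
        ultimately show "E' x' y'" using K gV fg unfolding is_clique_def E'_def by auto
      qed
      ultimately show "K' \<in> ?Fam'" by auto
    qed
    have "card ?Fam \<le> card ?Fam'" by (rule card_inj_on_le[OF inj img fin'])
    then have "num_Kk E (nbhd V E (f u) \<inter> nbhd V E (f v)) (r-2) \<le> num_Kk E' (nbhd {0..<n} E' u \<inter> nbhd {0..<n} E' v) (r-2)"
      by (simp add: num_Kk_def)
    then show "real (num_Kk E' (nbhd {0..<n} E' u \<inter> nbhd {0..<n} E' v) (r - 2)) \<ge> \<epsilon> * real n ^ (r - 2)"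
      using c by linarith
  qed
  have nh': "\<not> (\<exists>(W :: nat set) (F :: nat \<Rightarrow> nat \<Rightarrow> bool) (\<phi> :: nat \<Rightarrow> nat).
       sgraph W F \<and> Kr_free W F r \<and> real (card W) < \<beta> \<and> graph_hom {0..<n} E' W F \<phi>)"
  proof
    assume "\<exists>(W :: nat set) (F :: nat \<Rightarrow> nat \<Rightarrow> bool) (\<phi> :: nat \<Rightarrow> nat).
       sgraph W F \<and> Kr_free W F r \<and> real (card W) < \<beta> \<and> graph_hom {0..<n} E' W F \<phi>"
    then obtain W :: "nat set" and F :: "nat \<Rightarrow> nat \<Rightarrow> bool" and \<phi> :: "nat \<Rightarrow> nat" where W: "sgraph W F" "Kr_free W F r" "real (card W) < \<beta>" "graph_hom {0..<n} E' W F \<phi>"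
      by blast
    have "graph_hom V E W F (\<phi> \<circ> g)"
      using W(4) sg gV fg unfolding graph_hom_def sgraph_def E'_def by auto
    then show False using nh W by blast
  qed
  show ?thesis using npos sg' kf' cod' nh' by blast
qed



datatype vtx = SV "nat \<Rightarrow> bool" | AV nat bool nat | BV nat | QV nat nat

fun adj :: "vtx \<Rightarrow> vtx \<Rightarrow> bool" where
  "adj (SV x) (AV i b m) = (x i = b)"
| "adj (AV i b m) (SV x) = (x i = b)"
| "adj (SV x) (BV m) = True"
| "adj (BV m) (SV x) = True"
| "adj (AV i b m) (AV j c m') = (i = j \<and> b \<noteq> c)"
| "adj (QV j m) (QV j' m') = (j \<noteq> j')"
| "adj (QV j m) _ = True"
| "adj _ (QV j m) = True"
| "adj _ _ = False"

fun isQ :: "vtx \<Rightarrow> bool" where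
  "isQ (QV j m) = True" | "isQ _ = False"

lemma adj_sym: "adj u v = adj v u"
  by (cases u; cases v) auto

lemma adj_irr: "\<not> adj u u"
  by (cases u) auto

lemma no_tri: "adj a b \<Longrightarrow> adj b c \<Longrightarrow> adj a c \<Longrightarrow> isQ a \<or> isQ b \<or> isQ c"
  by (cases a; cases b; cases c) auto

lemma card_fix0:
  fixes k :: nat
  assumes "i < k" "j < k" "i \<noteq> j"
  shows "card {x\<in>PiE {..<k} (\<lambda>_. (UNIV::bool set)). x i = b \<and> x j = c} = 2^(k-2)"
proof -
  define X where "X t = (if t = i then {b} else if t = j then {c} else (UNIV::bool set))" for t
  have eq: "{x\<in>PiE {..<k} (\<lambda>_. (UNIV::bool set)). x i = b \<and> x j = c} = PiE {..<k} X"
  proof (intro equalityI subsetI)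
    fix x assume "x \<in> {x\<in>PiE {..<k} (\<lambda>_. (UNIV::bool set)). x i = b \<and> x j = c}"
    then show "x \<in> PiE {..<k} X" by (simp add: PiE_iff X_def)
  next
    fix x assume x: "x \<in> PiE {..<k} X"
    then have "x i \<in> X i" "x j \<in> X j" using assms by (auto simp: PiE_iff)
    then show "x \<in> {x\<in>PiE {..<k} (\<lambda>_. (UNIV::bool set)). x i = b \<and> x j = c}"
      using x assms by (simp add: PiE_iff X_def)
  qed
  have cX: "card (X t) = (if t \<in> {i,j} then 1 else 2)" for t by (simp add: X_def)
  have "card (PiE {..<k} X) = (\<Prod>t<k. card (X t))" by (simp add: card_PiE)
  also have "\<dots> = (\<Prod>t\<in>{..<k} - {i,j}. card (X t)) * (\<Prod>t\<in>{i,j}. card (X t))"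
    using assms by (intro prod.subset_diff) auto
  also have "(\<Prod>t\<in>{..<k} - {i,j}. card (X t)) = (\<Prod>t\<in>{..<k} - {i,j}. 2)"
    by (rule prod.cong) (auto simp: cX)
  also have "(\<Prod>t\<in>{i,j}. card (X t)) = 1" using assms by (simp add: cX)
  also have "(\<Prod>t\<in>{..<k} - {i,j}. (2::nat)) = 2^(k-2)" using assms by (simp add: card_Diff_subset)
  finally show ?thesis using eq by simp
qed

locale constr =
  fixes k r :: nat
  assumes k2: "2 \<le> k" and r3: "3 \<le> r"
begin

definition "N = (2::nat)^k"
definition "h = N * (4*k+1)"
definition "Sset = PiE {..<k} (\<lambda>_. (UNIV::bool set))"
definition "Sb = SV ` Sset"
definition "Ab = {AV i b m | i b m. i < k \<and> m < N}"
definition "Bb = BV ` {..<2*k*N}"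
definition "Qb j = QV j ` {..<h}"
definition "Qall = (\<Union>j<r-3. Qb j)"
definition "Hs = Sb \<union> Ab \<union> Bb"
definition "GV = Hs \<union> Qall"
definition "GE u v \<longleftrightarrow> u \<in> GV \<and> v \<in> GV \<and> adj u v"

lemma mem_SV[simp]: "SV x \<in> GV \<longleftrightarrow> x \<in> Sset"
  by (auto simp: GV_def Hs_def Sb_def Ab_def Bb_def Qall_def Qb_def)
lemma mem_AV[simp]: "AV i b m \<in> GV \<longleftrightarrow> i < k \<and> m < N"
  by (auto simp: GV_def Hs_def Sb_def Ab_def Bb_def Qall_def Qb_def)
lemma mem_BV[simp]: "BV m \<in> GV \<longleftrightarrow> m < 2*k*N"
  by (auto simp: GV_def Hs_def Sb_def Ab_def Bb_def Qall_def Qb_def)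
lemma mem_QV[simp]: "QV j m \<in> GV \<longleftrightarrow> j < r - 3 \<and> m < h"
  by (auto simp: GV_def Hs_def Sb_def Ab_def Bb_def Qall_def Qb_def)

lemma N_pos: "N > 0" by (simp add: N_def)

lemma card_Sset: "card Sset = N"
  by (simp add: Sset_def card_PiE N_def)

lemma finite_GV: "finite GV"
proof -
  have "finite Sset" by (simp add: Sset_def finite_PiE)
  moreover have "Ab = (\<lambda>(i,b,m). AV i b m) ` ({..<k} \<times> UNIV \<times> {..<N})"
    by (auto simp: Ab_def image_iff)
  ultimately show ?thesis
    by (simp add: GV_def Hs_def Sb_def Bb_def Qall_def Qb_def)
qed

lemma card_GV: "card GV \<le> (r-2) * h"
proof -
  have "finite Sset" by (simp add: Sset_def finite_PiE)
  have cS: "card Sb \<le> N" unfolding Sb_def using card_image_le[OF \<open>finite Sset\<close>, of SV] card_Sset by simp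
  have "Ab = (\<lambda>(i,b,m). AV i b m) ` ({..<k} \<times> UNIV \<times> {..<N})"
    by (auto simp: Ab_def image_iff)
  then have cA: "card Ab \<le> 2*k*N"
    using card_image_le[of "{..<k} \<times> (UNIV::bool set) \<times> {..<N}" "(\<lambda>(i,b,m). AV i b m)"]
    by (simp add: card_cartesian_product)
  have cB: "card Bb \<le> 2*k*N" unfolding Bb_def using card_image_le[of "{..<2*k*N}" BV] by simp
  have cQ: "card Qall \<le> (r-3) * h"
  proof -
    have "card Qall \<le> (\<Sum>j<r-3. card (Qb j))" unfolding Qall_def by (rule card_UN_le) simp
    also have "\<dots> \<le> (\<Sum>j<r-3. h)"
      by (rule sum_mono) (metis Qb_def card_image_le card_lessThan finite_lessThan)
    finally show ?thesis by simp
  qed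
  have fS: "finite Sb" "finite Ab" "finite Bb"
    using finite_GV by (auto simp: GV_def Hs_def intro: finite_subset)
  have "card GV \<le> card Hs + card Qall" unfolding GV_def by (rule card_Un_le)
  also have "card Hs \<le> card Sb + card Ab + card Bb"
    unfolding Hs_def by (meson card_Un_le add_right_mono le_trans)
  finally have "card GV \<le> N + 2*k*N + 2*k*N + (r-3)*h" using cS cA cB cQ by linarith
  also have "\<dots> = h + (r-3)*h" by (simp add: h_def algebra_simps)
  also have "\<dots> = (r-2)*h" using r3
    by (metis Suc_diff_le diff_Suc_Suc mult_Suc numeral_2_eq_2 numeral_3_eq_3 Suc_le_lessD)
  finally show ?thesis .
qed


lemma GE_sym: "GE u v = GE v u"
  unfolding GE_def using adj_sym by blast

lemma sgraph_G: "sgraph GV GE"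
  unfolding sgraph_def using finite_GV adj_irr by (auto simp: GE_def adj_sym)

lemma Hs_notQ: "v \<in> Hs \<Longrightarrow> \<not> isQ v"
  by (auto simp: Hs_def Sb_def Ab_def Bb_def)

lemma GV_cases: "v \<in> GV \<Longrightarrow> v \<in> Hs \<or> v \<in> Qall"
  by (auto simp: GV_def)

lemma Qall_isQ: "v \<in> Qall \<Longrightarrow> isQ v"
  by (auto simp: Qall_def Qb_def)

lemma notQ_Hs: "v \<in> GV \<Longrightarrow> \<not> isQ v \<Longrightarrow> v \<in> Hs"
  using GV_cases Qall_isQ by blast

lemma card3: assumes "finite X" "3 \<le> card X" shows "\<exists>a\<in>X. \<exists>b\<in>X. \<exists>c\<in>X. a \<noteq> b \<and> b \<noteq> c \<and> a \<noteq> c"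
proof -
  obtain T where T: "T \<subseteq> X" "card T = 3" using obtain_subset_with_card_n[OF assms(2)] by metis
  then obtain a b c where "T = {a,b,c}" "a \<noteq> b" "b \<noteq> c" "a \<noteq> c" by (auto simp: card_3_iff)
  then show ?thesis using T by auto
qed

lemma Kr_free_G: "Kr_free GV GE r"
  unfolding Kr_free_def
proof
  assume "\<exists>S. S \<subseteq> GV \<and> finite S \<and> card S = r \<and> is_clique GE S"
  then obtain K where K: "K \<subseteq> GV" "finite K" "card K = r" "is_clique GE K" by auto
  have adjK: "\<And>x y. x \<in> K \<Longrightarrow> y \<in> K \<Longrightarrow> x \<noteq> y \<Longrightarrow> adj x y"
    using K(4) by (auto simp: is_clique_def GE_def)
  have cH: "card (K \<inter> Hs) \<le> 2"
  proof (rule ccontr)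
    assume "\<not> card (K \<inter> Hs) \<le> 2"
    then obtain a b c where abc: "a \<in> K \<inter> Hs" "b \<in> K \<inter> Hs" "c \<in> K \<inter> Hs" "a \<noteq> b" "b \<noteq> c" "a \<noteq> c"
      using card3[of "K \<inter> Hs"] K(2) by auto
    then have "adj a b" "adj b c" "adj a c" using adjK by auto
    then have "isQ a \<or> isQ b \<or> isQ c" by (rule no_tri)
    then show False using abc Hs_notQ by auto
  qed
  define idx where "idx = (\<lambda>v. case v of QV j m \<Rightarrow> j | _ \<Rightarrow> 0)"
  have "inj_on idx (K \<inter> Qall)"
  proof (rule inj_onI)
    fix x y assume x: "x \<in> K \<inter> Qall" and y: "y \<in> K \<inter> Qall" and e: "idx x = idx y"
    show "x = y"
    proof (rule ccontr)
      assume "x \<noteq> y"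
      then have "adj x y" using adjK x y by auto
      then show False using x y e by (auto simp: Qall_def Qb_def idx_def)
    qed
  qed
  moreover have "idx ` (K \<inter> Qall) \<subseteq> {..<r-3}" by (auto simp: Qall_def Qb_def idx_def)
  ultimately have cQ: "card (K \<inter> Qall) \<le> r - 3"
    by (metis card_image card_lessThan card_mono finite_lessThan)
  have "K = (K \<inter> Hs) \<union> (K \<inter> Qall)" using K(1) by (auto simp: GV_def)
  then have "card K \<le> card (K \<inter> Hs) + card (K \<inter> Qall)" by (metis card_Un_le)
  then show False using cH cQ K(3) r3 by linarith
qed

lemma card_Sb: "card Sb = N"
  unfolding Sb_def by (simp add: card_image inj_on_def card_Sset)

lemma h_pos: "h > 0" by (simp add: h_def N_pos)

lemma rigid:
  fixes W :: "nat set" and F :: "nat \<Rightarrow> nat \<Rightarrow> bool" and \<phi> :: "vtx \<Rightarrow> nat"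
  assumes sgW: "sgraph W F" and kfW: "Kr_free W F r" and hom: "graph_hom GV GE W F \<phi>"
  shows "N \<le> card W"
proof -
  have Firr: "\<And>z. \<not> F z z" using sgW by (simp add: sgraph_def)
  have homE: "\<And>x y. GE x y \<Longrightarrow> F (\<phi> x) (\<phi> y)" using hom by (simp add: graph_hom_def)
  have homV: "\<And>x. x \<in> GV \<Longrightarrow> \<phi> x \<in> W" using hom by (simp add: graph_hom_def)
  have inj: "inj_on \<phi> Sb"
  proof (rule inj_onI)
    fix u v assume u: "u \<in> Sb" and v: "v \<in> Sb" and e: "\<phi> u = \<phi> v"
    obtain x y where xy: "u = SV x" "v = SV y" "x \<in> Sset" "y \<in> Sset" using u v by (auto simp: Sb_def)
    show "u = v"
    proof (rule ccontr)
      assume "u \<noteq> v"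
      then have "x \<noteq> y" using xy by auto
      have "\<exists>i<k. x i \<noteq> y i"
      proof (rule ccontr)
        assume "\<not> (\<exists>i<k. x i \<noteq> y i)"
        then have "x = y" using xy(3,4) unfolding Sset_def by (intro PiE_ext[of x _ _ y]) auto
        then show False using \<open>x \<noteq> y\<close> by simp
      qed
      then obtain i where i: "i < k" "x i \<noteq> y i" by blast
      define q where "q = (\<lambda>t. if t = 0 then SV x else if t = 1 then AV i (x i) 0
                          else if t = 2 then AV i (y i) 0 else QV (t-3) 0)"
      define q' where "q' = (\<lambda>t. if t = 0 then SV y else q t)"
      have pq: "\<phi> \<circ> q' = \<phi> \<circ> q" using e xy by (auto simp: q'_def q_def)
      have adjq: "\<And>s t. s < r \<Longrightarrow> t < r \<Longrightarrow> s \<noteq> t \<Longrightarrow> GE (q s) (q t) \<or> GE (q' s) (q' t)"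
      proof -
        fix s t assume st: "s < r" "t < r" "s \<noteq> t"
        have qV: "\<And>t. t < r \<Longrightarrow> q t \<in> GV \<and> q' t \<in> GV"
          using i xy h_pos N_pos r3 by (auto simp: q_def q'_def)
        have "adj (q s) (q t) \<or> adj (q' s) (q' t)"
          using st i by (auto simp: q_def q'_def)
        then show "GE (q s) (q t) \<or> GE (q' s) (q' t)" using qV st unfolding GE_def by blast
      qed
      define p where "p = \<phi> \<circ> q"
      have Fp: "\<And>s t. s < r \<Longrightarrow> t < r \<Longrightarrow> s \<noteq> t \<Longrightarrow> F (p s) (p t)"
      proof -
        fix s t assume "s < r" "t < r" "s \<noteq> t"
        then have "GE (q s) (q t) \<or> GE (q' s) (q' t)" by (rule adjq)
        moreover have "\<phi> (q' s) = \<phi> (q s)" "\<phi> (q' t) = \<phi> (q t)"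
          using fun_cong[OF pq, of s] fun_cong[OF pq, of t] by simp_all
        ultimately show "F (p s) (p t)" using homE unfolding p_def by (metis comp_apply)
      qed
      have injp: "inj_on p {..<r}"
      proof (rule inj_onI)
        fix s t assume s: "s \<in> {..<r}" and t: "t \<in> {..<r}" and e: "p s = p t"
        show "s = t"
        proof (rule ccontr)
          assume "s \<noteq> t"
          then have "F (p s) (p t)" using Fp s t by auto
          then show False using e Firr by simp
        qed
      qed
      have "p ` {..<r} \<subseteq> W"
      proof
        fix z assume "z \<in> p ` {..<r}"
        then obtain s where s: "s < r" "z = p s" by auto
        have "s \<noteq> (if s = 0 then 1 else 0)" by simp
        then have "F (p s) (p (if s = 0 then 1 else 0))" using Fp s r3 by auto
        then show "z \<in> W" using sgW s by (auto simp: sgraph_def)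
      qed
      moreover have "card (p ` {..<r}) = r" using injp by (simp add: card_image)
      moreover have "is_clique F (p ` {..<r})"
        unfolding is_clique_def using Fp by auto
      ultimately show False using kfW unfolding Kr_free_def by blast
    qed
  qed
  have "\<phi> ` Sb \<subseteq> W" using homV by (auto simp: Sb_def)
  moreover have "finite W" using sgW by (simp add: sgraph_def)
  ultimately have "card (\<phi> ` Sb) \<le> card W" by (simp add: card_mono)
  then show ?thesis using inj card_Sb by (simp add: card_image)
qed


lemma QV_notin_Hs[simp]: "QV j m \<notin> Hs"
  using Hs_notQ by fastforce

lemma adj_Q: "\<not> isQ u \<Longrightarrow> adj u (QV j m) \<and> adj (QV j m) u"
  by (cases u) auto

lemma card_Qb: "card (Qb j) = h"
  unfolding Qb_def by (simp add: card_image inj_on_def)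

lemma card_Bb: "card Bb = 2*k*N"
  unfolding Bb_def by (simp add: card_image inj_on_def)

lemma finite_CN: "finite (nbhd GV GE u \<inter> nbhd GV GE v)"
  using finite_GV by (rule finite_subset[rotated]) (auto simp: nbhd_def)

lemma Qb_sub: "j < r - 3 \<Longrightarrow> Qb j \<subseteq> GV"
  by (auto simp: Qb_def)

lemma Hpair:
  assumes u: "u \<in> GV" "\<not> isQ u" and v: "v \<in> GV" "\<not> isQ v"
    and C: "C \<subseteq> Hs" "\<forall>w\<in>C. GE u w \<and> GE v w"
  shows "card C * h^(r-3) \<le> num_Kk GE (nbhd GV GE u \<inter> nbhd GV GE v) (r-2)"
proof -
  define Y where "Y t = (if t = 0 then C else Qb (t-1))" for t
  have "(\<Prod>t<r-2. card (Y t)) \<le> num_Kk GE (nbhd GV GE u \<inter> nbhd GV GE v) (r-2)"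
  proof (rule transversal[OF finite_CN])
    fix t assume t: "t < r - 2"
    show "Y t \<subseteq> nbhd GV GE u \<inter> nbhd GV GE v"
    proof (cases "t = 0")
      case True
      then show ?thesis using C by (auto simp: Y_def nbhd_def GE_def)
    next
      case False
      then have "t - 1 < r - 3" using t by auto
      then show ?thesis using False u v adj_Q by (auto simp: Y_def nbhd_def GE_def Qb_def)
    qed
  next
    fix i j assume "i < r - 2" "j < r - 2" "i \<noteq> j"
    then show "Y i \<inter> Y j = {}"
      using C(1) Hs_notQ by (auto simp: Y_def Qb_def)
  next
    fix i j y z assume ij: "i < r - 2" "j < r - 2" "i \<noteq> j" and y: "y \<in> Y i" and z: "z \<in> Y j"
    have CV: "C \<subseteq> GV" using C by (auto simp: GE_def)
    have YV: "\<And>t. t < r - 2 \<Longrightarrow> Y t \<subseteq> GV"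
      using CV by (auto simp: Y_def Qb_def)
    have "adj y z"
    proof (cases "i = 0")
      case True
      then have "y \<in> C" "j \<noteq> 0" using y ij by (auto simp: Y_def)
      then show ?thesis using z Hs_notQ C(1) adj_Q by (auto simp: Y_def Qb_def)
    next
      case False
      note F = this
      show ?thesis
      proof (cases "j = 0")
        case True
        then have "z \<in> C" using z by (auto simp: Y_def)
        then show ?thesis using y F Hs_notQ C(1) adj_Q by (auto simp: Y_def Qb_def)
      next
        case False
        then show ?thesis using y z F ij by (auto simp: Y_def Qb_def)
      qed
    qed
    then show "GE y z" using YV ij y z unfolding GE_def by blast
  qed
  moreover have "(\<Prod>t<r-2. card (Y t)) = card C * h^(r-3)"
  proof -
    have "r - 2 = Suc (r - 3)" using r3 by simp
    then have "(\<Prod>t<r-2. card (Y t)) = card (Y 0) * (\<Prod>t<r-3. card (Y (Suc t)))"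
      by (simp only: prod.lessThan_Suc_shift)
    also have "\<dots> = card C * h^(r-3)" by (simp add: Y_def card_Qb)
    finally show ?thesis .
  qed
  ultimately show ?thesis by simp
qed

lemma Qpair:
  assumes "QV j m \<in> GV" "QV j m' \<in> GV"
  shows "N * (2*k*N) * h^(r-4) \<le> num_Kk GE (nbhd GV GE (QV j m) \<inter> nbhd GV GE (QV j m')) (r-2)"
proof -
  have j: "j < r - 3" using assms by simp
  define sk where "sk l = (if l < j then l else Suc l)" for l
  have sk_inj: "\<And>a b. sk a = sk b \<Longrightarrow> a = b" by (auto simp: sk_def split: if_splits)
  have sk_ne: "\<And>a. sk a \<noteq> j" by (auto simp: sk_def)
  have sk_lt: "\<And>a. a < r - 4 \<Longrightarrow> sk a < r - 3" using j by (auto simp: sk_def)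
  define Y where "Y t = (if t = 0 then Sb else if t = 1 then Bb else Qb (sk (t-2)))" for t
  have YV: "\<And>t. t < r - 2 \<Longrightarrow> Y t \<subseteq> GV"
  proof -
    fix t assume t: "t < r - 2"
    show "Y t \<subseteq> GV"
    proof (cases "t \<ge> 2")
      case True
      then have "t - 2 < r - 4" using t by auto
      then show ?thesis using True sk_lt by (auto simp: Y_def Qb_def)
    next
      case False
      then show ?thesis by (auto simp: Y_def GV_def Hs_def)
    qed
  qed
  have "(\<Prod>t<r-2. card (Y t)) \<le> num_Kk GE (nbhd GV GE (QV j m) \<inter> nbhd GV GE (QV j m')) (r-2)"
  proof (rule transversal[OF finite_CN])
    fix t assume t: "t < r - 2"
    show "Y t \<subseteq> nbhd GV GE (QV j m) \<inter> nbhd GV GE (QV j m')"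
    proof -
      have "sk (t-2) \<noteq> j" by (rule sk_ne)
      then show ?thesis
        using YV[OF t] assms by (auto simp: Y_def nbhd_def GE_def Sb_def Bb_def Qb_def)
    qed
  next
    fix a b assume "a < r - 2" "b < r - 2" "a \<noteq> b"
    moreover have "sk (a-2) \<noteq> sk (b-2)" if "a \<ge> 2" "b \<ge> 2"
    proof
      assume "sk (a-2) = sk (b-2)"
      then have "a - 2 = b - 2" by (rule sk_inj)
      then show False using that \<open>a \<noteq> b\<close> by arith
    qed
    ultimately show "Y a \<inter> Y b = {}"
      by (auto simp: Y_def Qb_def Sb_def Bb_def)
  next
    fix a b y z assume ab: "a < r - 2" "b < r - 2" "a \<noteq> b" and y: "y \<in> Y a" and z: "z \<in> Y b"
    have "adj y z"
    proof -
      have "a - 2 \<noteq> b - 2 \<or> a < 2 \<or> b < 2" using ab by auto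
      then show ?thesis using y z ab sk_inj
        by (auto simp: Y_def Qb_def Sb_def Bb_def split: if_splits)
    qed
    then show "GE y z" using YV ab y z unfolding GE_def by blast
  qed
  moreover have "(\<Prod>t<r-2. card (Y t)) = N * (2*k*N) * h^(r-4)"
  proof -
    have "r - 2 = Suc (Suc (r - 4))" using j by simp
    then have "(\<Prod>t<r-2. card (Y t)) = card (Y 0) * (card (Y 1) * (\<Prod>t<r-4. card (Y (Suc (Suc t)))))"
      by (simp only: prod.lessThan_Suc_shift One_nat_def)
    also have "\<dots> = N * (2*k*N) * h^(r-4)" by (simp add: Y_def card_Qb card_Sb card_Bb)
    finally show ?thesis .
  qed
  ultimately show ?thesis by simp
qed


lemma card_fix:
  assumes "i < k" "j < k" "i \<noteq> j"
  shows "card {x\<in>Sset. x i = b \<and> x j = c} = 2^(k-2)"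
  unfolding Sset_def using card_fix0[OF assms] by blast

definition "good u v \<longleftrightarrow> (\<exists>C. C \<subseteq> Hs \<and> (\<forall>w\<in>C. GE u w \<and> GE v w) \<and> 2^(k-2) \<le> card C)"

lemma good_sym: "good u v \<Longrightarrow> good v u"
  unfolding good_def by blast

lemma pow_le_N: "2^(k-2) \<le> N"
  unfolding N_def by (simp add: power_increasing)

lemma g_SS: "x \<in> Sset \<Longrightarrow> y \<in> Sset \<Longrightarrow> good (SV x) (SV y)"
  unfolding good_def
proof (intro exI conjI)
  assume "x \<in> Sset" "y \<in> Sset"
  then show "\<forall>w\<in>Bb. GE (SV x) w \<and> GE (SV y) w" by (auto simp: Bb_def GE_def)
  show "Bb \<subseteq> Hs" by (auto simp: Hs_def)
  have "2^(k-2) \<le> N" by (rule pow_le_N)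
  also have "N \<le> 2*k*N" using k2 by simp
  finally show "2^(k-2) \<le> card Bb" by (simp add: card_Bb)
qed

lemma card_AVimg: "card (AV i b ` {..<N}) = N"
  by (simp add: card_image inj_on_def)

lemma g_SA: "x \<in> Sset \<Longrightarrow> i < k \<Longrightarrow> m < N \<Longrightarrow> x i \<noteq> b \<Longrightarrow> good (SV x) (AV i b m)"
  unfolding good_def
proof (intro exI conjI)
  assume "x \<in> Sset" "i < k" "m < N" "x i \<noteq> b"
  then show "\<forall>w\<in>AV i (x i) ` {..<N}. GE (SV x) w \<and> GE (AV i b m) w" by (auto simp: GE_def)
  show "AV i (x i) ` {..<N} \<subseteq> Hs" using \<open>i < k\<close> by (auto simp: Hs_def Ab_def)
  show "2^(k-2) \<le> card (AV i (x i) ` {..<N})" using pow_le_N card_AVimg by simp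
qed

lemma g_AA1: "i < k \<Longrightarrow> m < N \<Longrightarrow> m' < N \<Longrightarrow> good (AV i b m) (AV i b m')"
  unfolding good_def
proof (intro exI conjI)
  assume "i < k" "m < N" "m' < N"
  then show "\<forall>w\<in>AV i (\<not> b) ` {..<N}. GE (AV i b m) w \<and> GE (AV i b m') w" by (auto simp: GE_def)
  show "AV i (\<not> b) ` {..<N} \<subseteq> Hs" using \<open>i < k\<close> by (auto simp: Hs_def Ab_def)
  show "2^(k-2) \<le> card (AV i (\<not> b) ` {..<N})" using pow_le_N card_AVimg by simp
qed

lemma card_Sfix: assumes "i < k" "j < k" "i \<noteq> j"
  shows "card (SV ` {x\<in>Sset. x i = b \<and> x j = c}) = 2^(k-2)"
  using card_fix[OF assms] by (simp add: card_image inj_on_def)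

lemma g_AA2: "i < k \<Longrightarrow> j < k \<Longrightarrow> i \<noteq> j \<Longrightarrow> m < N \<Longrightarrow> m' < N \<Longrightarrow> good (AV i b m) (AV j c m')"
  unfolding good_def
proof (intro exI conjI)
  assume a: "i < k" "j < k" "i \<noteq> j" "m < N" "m' < N"
  then show "\<forall>w\<in>SV ` {x\<in>Sset. x i = b \<and> x j = c}. GE (AV i b m) w \<and> GE (AV j c m') w" by (auto simp: GE_def)
  show "SV ` {x\<in>Sset. x i = b \<and> x j = c} \<subseteq> Hs" by (auto simp: Hs_def Sb_def)
  show "2^(k-2) \<le> card (SV ` {x\<in>Sset. x i = b \<and> x j = c})" using card_Sfix[OF a(1-3)] by simp
qed

lemma g_AB: "i < k \<Longrightarrow> m < N \<Longrightarrow> m' < 2*k*N \<Longrightarrow> good (AV i b m) (BV m')"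
  unfolding good_def
proof -
  assume a: "i < k" "m < N" "m' < 2*k*N"
  define j where "j = (if i = 0 then 1 else (0::nat))"
  have j: "j < k" "i \<noteq> j" using k2 by (auto simp: j_def)
  let ?C = "SV ` {x\<in>Sset. x i = b \<and> x j = True}"
  have "\<forall>w\<in>?C. GE (AV i b m) w \<and> GE (BV m') w" using a by (auto simp: GE_def)
  moreover have "?C \<subseteq> Hs" by (auto simp: Hs_def Sb_def)
  moreover have "2^(k-2) \<le> card ?C" using card_Sfix[OF a(1) j, of b True] by simp
  ultimately show "\<exists>C. C \<subseteq> Hs \<and> (\<forall>w\<in>C. GE (AV i b m) w \<and> GE (BV m') w) \<and> 2^(k-2) \<le> card C"
    by blast
qed

lemma g_BB: "m < 2*k*N \<Longrightarrow> m' < 2*k*N \<Longrightarrow> good (BV m) (BV m')"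
  unfolding good_def
proof (intro exI conjI)
  assume "m < 2*k*N" "m' < 2*k*N"
  then show "\<forall>w\<in>Sb. GE (BV m) w \<and> GE (BV m') w" by (auto simp: GE_def Sb_def)
  show "Sb \<subseteq> Hs" by (auto simp: Hs_def)
  show "2^(k-2) \<le> card Sb" using pow_le_N card_Sb by simp
qed

lemma good_all:
  assumes "u \<in> GV" "v \<in> GV" "\<not> isQ u" "\<not> isQ v" "u \<noteq> v" "\<not> adj u v"
  shows "good u v"
proof (cases u)
  case (SV x)
  show ?thesis
  proof (cases v)
    case (SV y) then show ?thesis using assms \<open>u = SV x\<close> g_SS by simp
  next
    case (AV j c m') then show ?thesis using assms \<open>u = SV x\<close> g_SA by simp
  next
    case (BV m') then show ?thesis using assms \<open>u = SV x\<close> by simp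
  next
    case (QV j m') then show ?thesis using assms by simp
  qed
next
  case (AV i b m)
  show ?thesis
  proof (cases v)
    case (SV y) then show ?thesis using assms \<open>u = AV i b m\<close> g_SA good_sym by simp
  next
    case (AV j c m')
    show ?thesis
    proof (cases "i = j")
      case True
      then have "b = c" using assms \<open>u = AV i b m\<close> \<open>v = AV j c m'\<close> by auto
      then show ?thesis using True assms \<open>u = AV i b m\<close> \<open>v = AV j c m'\<close> g_AA1 by simp
    next
      case False
      then show ?thesis using assms \<open>u = AV i b m\<close> \<open>v = AV j c m'\<close> g_AA2 by simp
    qed
  next
    case (BV m') then show ?thesis using assms \<open>u = AV i b m\<close> g_AB by simp
  next
    case (QV j m') then show ?thesis using assms by simp
  qed
next
  case (BV m)
  show ?thesis
  proof (cases v)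
    case (SV y) then show ?thesis using assms \<open>u = BV m\<close> by simp
  next
    case (AV j c m') then show ?thesis using assms \<open>u = BV m\<close> g_AB good_sym by simp
  next
    case (BV m') then show ?thesis using assms \<open>u = BV m\<close> g_BB by simp
  next
    case (QV j m') then show ?thesis using assms by simp
  qed
next
  case (QV j m) then show ?thesis using assms by simp
qed

lemma codens:
  assumes "u \<in> GV" "v \<in> GV" "u \<noteq> v" "\<not> GE u v"
  shows "2^(k-2) * h^(r-3) \<le> num_Kk GE (nbhd GV GE u \<inter> nbhd GV GE v) (r-2)"
proof (cases "isQ u \<or> isQ v")
  case False
  then have "\<not> adj u v" using assms by (simp add: GE_def)
  then have "good u v" using good_all assms False by blast
  then obtain C where C: "C \<subseteq> Hs" "\<forall>w\<in>C. GE u w \<and> GE v w" "2^(k-2) \<le> card C"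
    unfolding good_def by blast
  have "2^(k-2) * h^(r-3) \<le> card C * h^(r-3)" using C(3) by simp
  also have "\<dots> \<le> num_Kk GE (nbhd GV GE u \<inter> nbhd GV GE v) (r-2)"
    using Hpair[OF assms(1) _ assms(2) _ C(1,2)] False by blast
  finally show ?thesis .
next
  case True
  have nadj: "\<not> adj u v" using assms by (simp add: GE_def)
  have isQD: "\<And>w. isQ w \<Longrightarrow> \<exists>j m. w = QV j m" by (case_tac w) auto
  have "isQ u \<and> isQ v"
  proof (rule ccontr)
    assume "\<not> (isQ u \<and> isQ v)"
    then have "(isQ u \<and> \<not> isQ v) \<or> (isQ v \<and> \<not> isQ u)" using True by blast
    then show False
    proof
      assume a: "isQ u \<and> \<not> isQ v"
      then obtain j m where "u = QV j m" using isQD by blast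
      then show False using adj_Q[of v j m] a nadj by simp
    next
      assume a: "isQ v \<and> \<not> isQ u"
      then obtain j m where "v = QV j m" using isQD by blast
      then show False using adj_Q[of u j m] a nadj by simp
    qed
  qed
  then obtain j m j' m' where jm: "u = QV j m" "v = QV j' m'"
    using isQD by blast
  then have jj: "j = j'" using nadj by simp
  have Q: "N * (2*k*N) * h^(r-4) \<le> num_Kk GE (nbhd GV GE u \<inter> nbhd GV GE v) (r-2)"
    using Qpair[of j m m'] assms jm jj by simp
  have "j < r - 3" using assms(1) jm by simp
  then have r4: "r - 3 = Suc (r - 4)" by linarith
  have kk: "k = (k-2) + 2" using k2 by simp
  have N4: "N = 2^(k-2) * 4"
    unfolding N_def by (subst kk) (simp only: power_add, simp)
  define p where "p = (2::nat)^(k-2)"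
  have "2^(k-2) * h^(r-3) = (p * (4*k+1)) * N * h^(r-4)"
    using r4 by (simp add: h_def p_def algebra_simps)
  also have "\<dots> \<le> (2*k*N) * N * h^(r-4)"
  proof -
    have "p * (4*k+1) \<le> p * (8*k)" using k2 by (intro mult_left_mono) auto
    also have "\<dots> = 2*k*N" using N4 by (simp add: p_def)
    finally show ?thesis by (intro mult_right_mono) auto
  qed
  also have "\<dots> = N * (2*k*N) * h^(r-4)" by simp
  finally show ?thesis using Q by linarith
qed

end


context constr begin
lemma GV_ne: "GV \<noteq> {}"
proof -
  have "BV 0 \<in> GV" using k2 N_pos by simp
  then show ?thesis by blast
qed

lemma h_eq: "h = 4 * 2^(k-2) * (4*k+1)"
proof -
  have kk: "k = (k-2) + 2" using k2 by simp
  have "N = 2^(k-2) * 4" unfolding N_def by (subst kk) (simp only: power_add, simp)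
  then show ?thesis by (simp add: h_def)
qed
end

lemma arith_main:
  fixes r k :: nat and \<epsilon> :: real
  assumes r3: "r \<ge> 3" and ep: "\<epsilon> > 0" and sm: "8 * real r ^ r * \<epsilon> < 1"
    and kb: "real k < 1 / (8 * real r ^ r * \<epsilon>) + 1"
  shows "4 * \<epsilon> * real (r-2) ^ (r-2) * (4 * real k + 1) \<le> 1"
proof -
  define R where "R = real r ^ r"
  define P where "P = real (r-2) ^ (r-2)"
  define a where "a = 1 / (8 * R * \<epsilon>)"
  have Rpos: "R > 0" using r3 by (simp add: R_def)
  have a1: "a > 1" using sm Rpos ep by (simp add: a_def R_def field_simps)
  have P9: "9 * P \<le> R"
  proof -
    have "r = (r-2) + 2" using r3 by simp
    then have "real r ^ r = real r ^ (r-2) * real r ^ 2" by (metis power_add)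
    moreover have "real (r-2) ^ (r-2) \<le> real r ^ (r-2)" by (intro power_mono) auto
    moreover have "9 \<le> real r ^ 2"
    proof -
      have "(3::real) ^ 2 \<le> real r ^ 2" using r3 by (intro power_mono) auto
      then show ?thesis by simp
    qed
    moreover have "0 \<le> real (r-2) ^ (r-2)" by simp
    ultimately have "real (r-2) ^ (r-2) * 9 \<le> real r ^ (r-2) * real r ^ 2"
      by (intro mult_mono) auto
    then show ?thesis unfolding P_def R_def using \<open>real r ^ r = _\<close> by simp
  qed
  have Ppos: "P \<ge> 0" by (simp add: P_def)
  have "4 * real k + 1 \<le> 9 * a" using kb a1 by (simp add: a_def R_def)
  then have "4 * \<epsilon> * P * (4 * real k + 1) \<le> 4 * \<epsilon> * P * (9 * a)"
    using ep Ppos by (intro mult_left_mono) auto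
  also have "\<dots> = 36 * P / (8 * R)" using ep Rpos by (simp add: a_def field_simps)
  also have "\<dots> \<le> 1" using P9 Rpos by (simp add: field_simps)
  finally show ?thesis by (simp add: P_def)
qed


theorem theorem1p7:
  fixes r :: nat and \<epsilon> :: real
  assumes "r \<ge> 3" and "\<epsilon> > 0"
  shows "\<exists>n::nat. n > 0 \<and> (\<exists>E :: nat \<Rightarrow> nat \<Rightarrow> bool.
           sgraph {0..<n} E \<and> Kr_free {0..<n} E r \<and>
           (\<forall>u\<in>{0..<n}. \<forall>v\<in>{0..<n}. u \<noteq> v \<and> \<not> E u v \<longrightarrow>
              real (num_Kk E (nbhd {0..<n} E u \<inter> nbhd {0..<n} E v) (r - 2)) \<ge> \<epsilon> * real n ^ (r - 2)) \<and>
           \<not> (\<exists>(W :: nat set) (F :: nat \<Rightarrow> nat \<Rightarrow> bool) (\<phi> :: nat \<Rightarrow> nat).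
                 sgraph W F \<and> Kr_free W F r \<and>
                 real (card W) < 2 powr (1 / (8 * real r ^ r * \<epsilon>)) \<and>
                 graph_hom {0..<n} E W F \<phi>))"
proof (cases "8 * real r ^ r * \<epsilon> < 1")
  case False
  define E where "E = (\<lambda>(u::nat) (v::nat). (u = 0 \<and> v = 1) \<or> (u = 1 \<and> v = 0))"
  have Rpos: "8 * real r ^ r * \<epsilon> > 0" using assms by simp
  have bnd: "2 powr (1 / (8 * real r ^ r * \<epsilon>)) \<le> 2"
  proof -
    have "1 / (8 * real r ^ r * \<epsilon>) \<le> 1" using False Rpos by (simp add: field_simps)
    then have "2 powr (1 / (8 * real r ^ r * \<epsilon>)) \<le> 2 powr 1" by (intro powr_mono) auto
    then show ?thesis by simp
  qed
  have sg: "sgraph {0..<2} E" by (auto simp: sgraph_def E_def)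
  have kf: "Kr_free {0..<2} E r"
    unfolding Kr_free_def
  proof
    assume "\<exists>S. S \<subseteq> {0..<2} \<and> finite S \<and> card S = r \<and> is_clique E S"
    then obtain S where "S \<subseteq> {0..<(2::nat)}" "card S = r" by auto
    then have "r \<le> 2" by (metis card_atLeastLessThan card_mono finite_atLeastLessThan diff_zero)
    then show False using assms by simp
  qed
  have cod: "\<forall>u\<in>{0..<2}. \<forall>v\<in>{0..<2}. u \<noteq> v \<and> \<not> E u v \<longrightarrow>
              real (num_Kk E (nbhd {0..<2} E u \<inter> nbhd {0..<2} E v) (r - 2)) \<ge> \<epsilon> * real 2 ^ (r - 2)"
    by (auto simp: E_def)
  have nh: "\<not> (\<exists>(W :: nat set) (F :: nat \<Rightarrow> nat \<Rightarrow> bool) (\<phi> :: nat \<Rightarrow> nat).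
                 sgraph W F \<and> Kr_free W F r \<and>
                 real (card W) < 2 powr (1 / (8 * real r ^ r * \<epsilon>)) \<and>
                 graph_hom {0..<2} E W F \<phi>)"
  proof
    assume "\<exists>(W :: nat set) (F :: nat \<Rightarrow> nat \<Rightarrow> bool) (\<phi> :: nat \<Rightarrow> nat).
                 sgraph W F \<and> Kr_free W F r \<and>
                 real (card W) < 2 powr (1 / (8 * real r ^ r * \<epsilon>)) \<and>
                 graph_hom {0..<2} E W F \<phi>"
    then obtain W :: "nat set" and F :: "nat \<Rightarrow> nat \<Rightarrow> bool" and \<phi> :: "nat \<Rightarrow> nat" where
      W: "sgraph W F" "real (card W) < 2 powr (1 / (8 * real r ^ r * \<epsilon>))" "graph_hom {0..<2} E W F \<phi>"
      by blast
    have "F (\<phi> 0) (\<phi> 1)" using W(3) by (simp add: graph_hom_def E_def)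
    then have "\<phi> 0 \<noteq> \<phi> 1" using W(1) by (auto simp: sgraph_def)
    moreover have "\<phi> 0 \<in> W" "\<phi> 1 \<in> W" using W(3) by (auto simp: graph_hom_def)
    moreover have "finite W" using W(1) by (simp add: sgraph_def)
    ultimately have "card {\<phi> 0, \<phi> 1} \<le> card W" by (intro card_mono) auto
    then have "2 \<le> card W" using \<open>\<phi> 0 \<noteq> \<phi> 1\<close> by simp
    then show False using W(2) bnd by linarith
  qed
  show ?thesis
    by (rule exI[of _ 2]) (use sg kf cod nh in auto)
next
  case True
  define a where "a = 1 / (8 * real r ^ r * \<epsilon>)"
  have Rpos: "8 * real r ^ r * \<epsilon> > 0" using assms by simp
  have a1: "a > 1" using True Rpos by (simp add: a_def field_simps)
  define k where "k = nat \<lceil>a\<rceil>"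
  have ka: "a \<le> real k" using a1 by (simp add: k_def)
  have kb: "real k < a + 1" using a1 by (simp add: k_def) linarith
  have k2: "2 \<le> k"
  proof -
    have "1 < real k" using ka a1 by linarith
    then show ?thesis by linarith
  qed
  interpret c: constr k r using k2 assms by unfold_locales auto
  have ar: "4 * \<epsilon> * real (r-2) ^ (r-2) * (4 * real k + 1) \<le> 1"
    using arith_main[OF assms(1,2) True] kb by (simp add: a_def)
  have cod: "\<forall>u\<in>c.GV. \<forall>v\<in>c.GV. u \<noteq> v \<and> \<not> c.GE u v \<longrightarrow>
      real (num_Kk c.GE (nbhd c.GV c.GE u \<inter> nbhd c.GV c.GE v) (r-2)) \<ge> \<epsilon> * real (card c.GV) ^ (r-2)"
  proof (intro ballI impI)
    fix u v assume uv: "u \<in> c.GV" "v \<in> c.GV" "u \<noteq> v \<and> \<not> c.GE u v"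
    have L: "real (2^(k-2) * c.h^(r-3)) \<le> real (num_Kk c.GE (nbhd c.GV c.GE u \<inter> nbhd c.GV c.GE v) (r-2))"
      using c.codens[of u v] uv by linarith
    have "\<epsilon> * real (card c.GV) ^ (r-2) \<le> \<epsilon> * (real (r-2) * real c.h) ^ (r-2)"
    proof -
      have "real (card c.GV) \<le> real (r-2) * real c.h" using c.card_GV
        by (metis of_nat_le_iff of_nat_mult)
      then show ?thesis using assms by (intro mult_left_mono power_mono) auto
    qed
    also have "\<dots> = (4 * \<epsilon> * real (r-2) ^ (r-2) * (4 * real k + 1)) * (2^(k-2) * real c.h^(r-3))"
    proof -
      have rr: "r - 2 = Suc (r - 3)" using assms by simp
      have hh: "real c.h = 4 * 2^(k-2) * (4 * real k + 1)" using c.h_eq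
        by (metis (mono_tags, lifting) of_nat_1 of_nat_add of_nat_mult of_nat_numeral of_nat_power)
      show ?thesis
        unfolding power_mult_distrib
        by (subst (2) rr, subst power_Suc) (simp add: hh algebra_simps)
    qed
    also have "\<dots> \<le> 1 * (2^(k-2) * real c.h^(r-3))"
      using ar by (intro mult_right_mono) auto
    also have "\<dots> = real (2^(k-2) * c.h^(r-3))" by simp
    finally show "real (num_Kk c.GE (nbhd c.GV c.GE u \<inter> nbhd c.GV c.GE v) (r-2)) \<ge> \<epsilon> * real (card c.GV) ^ (r-2)"
      using L by linarith
  qed
  have nh: "\<not> (\<exists>(W::nat set) F (\<phi>::vtx \<Rightarrow> nat). sgraph W F \<and> Kr_free W F r \<and> real (card W) < 2 powr a \<and> graph_hom c.GV c.GE W F \<phi>)"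
  proof
    assume "\<exists>(W::nat set) F (\<phi>::vtx \<Rightarrow> nat). sgraph W F \<and> Kr_free W F r \<and> real (card W) < 2 powr a \<and> graph_hom c.GV c.GE W F \<phi>"
    then obtain W :: "nat set" and F :: "nat \<Rightarrow> nat \<Rightarrow> bool" and \<phi> :: "vtx \<Rightarrow> nat" where
      W: "sgraph W F" "Kr_free W F r" "real (card W) < 2 powr a" "graph_hom c.GV c.GE W F \<phi>"
      by blast
    have "c.N \<le> card W" using c.rigid[OF W(1,2,4)] .
    moreover have "2 powr a \<le> real c.N"
    proof -
      have "2 powr a \<le> 2 powr (real k)" using ka by (intro powr_mono) auto
      also have "\<dots> = real c.N" by (simp add: c.N_def powr_realpow)
      finally show ?thesis .
    qed
    ultimately show False using W(3) by linarith
  qed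
  show ?thesis
    using transfer[OF c.sgraph_G c.Kr_free_G c.GV_ne cod nh] unfolding a_def .
qed

end
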